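(* For any integers $q\ge 2$ and positive integers $w\le n$, there exists a $\mathrm{TOC}_q(n,2,w)$.
   Context: $\mathcal{H}_q(n,w)$ is the set of all words of length $n$ over $\mathbb{Z}_q$ with exactly $w$ nonzero entries, with the Hamming distance. An $(n,d,w)_q$-code is a nonempty subset of $\mathcal{H}_q(n,w)$ in which any two distinct words have Hamming distance at least $d$; $A_q(n,d,w)$ is the maximum size of such a code and a code of this size is optimal. A $\mathrm{TOC}_q(n,d,w)$ (tiling) is a partition of $\mathcal{H}_q(n,w)$ into mutually disjoint optimal $(n,d,w)_q$-codes. *)

theory Defs
  imports Main "HOL-Library.FuncSet"
begin

definition words :: "nat \<Rightarrow> nat \<Rightarrow> (nat \<Rightarrow> nat) set" where
  "words q n = {0..<n} \<rightarrow>\<^sub>E {0..<q}"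

definition hweight :: "nat \<Rightarrow> (nat \<Rightarrow> nat) \<Rightarrow> nat" where
  "hweight n x = card {i. i < n \<and> x i \<noteq> 0}"

definition hdist :: "nat \<Rightarrow> (nat \<Rightarrow> nat) \<Rightarrow> (nat \<Rightarrow> nat) \<Rightarrow> nat" where
  "hdist n x y = card {i. i < n \<and> x i \<noteq> y i}"

definition Hcw :: "nat \<Rightarrow> nat \<Rightarrow> nat \<Rightarrow> (nat \<Rightarrow> nat) set" where
  "Hcw q n w = {x \<in> words q n. hweight n x = w}"

definition is_code :: "nat \<Rightarrow> nat \<Rightarrow> nat \<Rightarrow> nat \<Rightarrow> (nat \<Rightarrow> nat) set \<Rightarrow> bool" where
  "is_code q n d w C \<longleftrightarrow> C \<noteq> {} \<and> C \<subseteq> Hcw q n w \<and>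
     (\<forall>x\<in>C. \<forall>y\<in>C. x \<noteq> y \<longrightarrow> hdist n x y \<ge> d)"

definition A_max :: "nat \<Rightarrow> nat \<Rightarrow> nat \<Rightarrow> nat \<Rightarrow> nat" where
  "A_max q n d w = Max {card C | C. is_code q n d w C}"

definition optimal_code :: "nat \<Rightarrow> nat \<Rightarrow> nat \<Rightarrow> nat \<Rightarrow> (nat \<Rightarrow> nat) set \<Rightarrow> bool" where
  "optimal_code q n d w C \<longleftrightarrow> is_code q n d w C \<and> card C = A_max q n d w"

definition is_TOC :: "nat \<Rightarrow> nat \<Rightarrow> nat \<Rightarrow> nat \<Rightarrow> (nat \<Rightarrow> nat) set set \<Rightarrow> bool" where
  "is_TOC q n d w P \<longleftrightarrow> \<Union>P = Hcw q n w \<and>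
     (\<forall>C\<in>P. optimal_code q n d w C) \<and>
     (\<forall>C\<in>P. \<forall>D\<in>P. C \<noteq> D \<longrightarrow> C \<inter> D = {})"

end

theory Submission
  imports Defs
begin

definition supp :: "nat \<Rightarrow> (nat \<Rightarrow> nat) \<Rightarrow> nat set" where
  "supp n x = {i. i < n \<and> x i \<noteq> 0}"

definition wsum :: "nat \<Rightarrow> (nat \<Rightarrow> nat) \<Rightarrow> nat" where
  "wsum n x = (\<Sum>i<n. x i)"

definition lastp :: "nat \<Rightarrow> (nat \<Rightarrow> nat) \<Rightarrow> nat" where
  "lastp n x = Max (supp n x)"

definition fixw :: "nat \<Rightarrow> nat \<Rightarrow> nat \<Rightarrow> (nat \<Rightarrow> nat) \<Rightarrow> (nat \<Rightarrow> nat)" where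
  "fixw q n s x = x(lastp n x := (s + 2*(q-1) - (wsum n x - x (lastp n x)) mod (q-1) - 1) mod (q-1) + 1)"

definition cls :: "nat \<Rightarrow> nat \<Rightarrow> nat \<Rightarrow> nat \<Rightarrow> (nat \<Rightarrow> nat) set" where
  "cls q n w s = {x \<in> Hcw q n w. wsum n x mod (q-1) = s}"

lemma hweight_supp: "hweight n x = card (supp n x)"
  by (simp add: hweight_def supp_def)

lemma finite_supp[simp]: "finite (supp n x)"
  by (simp add: supp_def)

lemma lastp_props:
  assumes "supp n x \<noteq> {}"
  shows "lastp n x < n" "x (lastp n x) \<noteq> 0" "lastp n x \<in> supp n x"
  using Max_in[OF finite_supp assms] by (auto simp: lastp_def supp_def)

lemma wsum_upd:
  assumes "m < n"
  shows "wsum n (x(m := v)) + x m = wsum n x + v"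
proof -
  have "wsum n (x(m := v)) = v + (\<Sum>i\<in>{..<n}-{m}. x i)"
    unfolding wsum_def using assms
    by (simp add: sum.remove[of "{..<n}" m])
  moreover have "wsum n x = x m + (\<Sum>i\<in>{..<n}-{m}. x i)"
    unfolding wsum_def using assms
    by (simp add: sum.remove[of "{..<n}" m])
  ultimately show ?thesis by simp
qed

lemma hdist_le1:
  assumes "\<And>i. i \<noteq> m \<Longrightarrow> x i = y i"
  shows "hdist n x y \<le> 1"
proof -
  have "{i. i < n \<and> x i \<noteq> y i} \<subseteq> {m}" using assms by auto
  then have "card {i. i < n \<and> x i \<noteq> y i} \<le> card {m}" by (intro card_mono) auto
  then show ?thesis by (simp add: hdist_def)
qed

lemma hdist0:
  assumes "x \<in> words q n" "y \<in> words q n" "hdist n x y = 0"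
  shows "x = y"
proof
  fix i
  have "{i. i < n \<and> x i \<noteq> y i} = {}" using assms(3) by (simp add: hdist_def)
  then show "x i = y i" using assms(1,2) unfolding words_def
    by (cases "i < n") (auto simp: PiE_def extensional_def)
qed

context
  fixes q n w :: nat
  assumes q2: "q \<ge> 2" and w1: "1 \<le> w" and wn: "w \<le> n"
begin

lemma fixw_props:
  assumes x: "x \<in> Hcw q n w" and s: "s < q - 1"
  shows "fixw q n s x \<in> cls q n w s"
    and "supp n (fixw q n s x) = supp n x"
    and "\<And>i. i \<noteq> lastp n x \<Longrightarrow> fixw q n s x i = x i"
proof -
  define k where "k = q - 1"
  have k: "k \<ge> 1" using q2 by (simp add: k_def)
  define m where "m = lastp n x"
  have ne: "supp n x \<noteq> {}" using x w1 by (auto simp: Hcw_def hweight_supp)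
  note L = lastp_props[OF ne, folded m_def]
  define r where "r = (wsum n x - x m) mod k"
  define v where "v = (s + 2*k - r - 1) mod k + 1"
  have fx: "fixw q n s x = x(m := v)" by (simp add: fixw_def m_def v_def r_def k_def)
  have "(s + 2*k - r - 1) mod k < k" using k by simp
  then have v1: "v \<ge> 1" "v \<le> k" by (auto simp: v_def)
  have vq: "v < q" using v1 q2 by (simp add: k_def)
  show sp: "supp n (fixw q n s x) = supp n x"
    using fx v1 L by (auto simp: supp_def)
  show "\<And>i. i \<noteq> lastp n x \<Longrightarrow> fixw q n s x i = x i" using fx m_def by simp
  have wsx: "x m \<le> wsum n x" unfolding wsum_def using L
    by (intro member_le_sum) auto
  have ws: "wsum n (fixw q n s x) = (wsum n x - x m) + v"
    using wsum_upd[OF L(1), of x v] fx wsx by simp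
  have rk: "r < k" using k by (simp add: r_def)
  have "(wsum n x - x m + v) mod k = (r + v) mod k"
    by (simp add: r_def mod_add_left_eq)
  also have "r + v = (s + 2*k - r - 1) mod k + (r + 1)" by (simp add: v_def)
  also have "((s + 2*k - r - 1) mod k + (r + 1)) mod k = ((s + 2*k - r - 1) + (r + 1)) mod k"
    by (metis mod_add_left_eq)
  also have "(s + 2*k - r - 1) + (r + 1) = s + k * 2" using rk k by simp
  also have "(s + k * 2) mod k = s" using s by (simp add: k_def)
  finally have sm: "wsum n (fixw q n s x) mod k = s" using ws by simp
  have "fixw q n s x \<in> words q n"
    using x fx L(1) vq unfolding Hcw_def words_def by (auto simp: PiE_def extensional_def)
  moreover have "hweight n (fixw q n s x) = w"
    using x sp by (simp add: hweight_supp Hcw_def)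
  ultimately show "fixw q n s x \<in> cls q n w s"
    using sm by (simp add: cls_def Hcw_def k_def)
qed

end

lemma mod_cancel_nat:
  fixes a b c k :: nat
  assumes "(a + c) mod k = (b + c) mod k"
  shows "a mod k = b mod k"
proof -
  have "(int a + int c) mod int k = (int b + int c) mod int k"
    using assms by (metis of_nat_add zmod_int)
  then have "(int a + int c - int c) mod int k = (int b + int c - int c) mod int k"
    by (rule mod_diff_cong) simp
  then have "int a mod int k = int b mod int k" by simp
  then show ?thesis by (metis of_nat_eq_iff zmod_int)
qed

lemma code_cls:
  assumes q2: "q \<ge> 2" and x: "x \<in> cls q n w s" and y: "y \<in> cls q n w s" and xy: "x \<noteq> y"
  shows "hdist n x y \<ge> 2"
proof (rule ccontr)
  define k where "k = q - 1"
  assume "\<not> 2 \<le> hdist n x y"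
  moreover have "hdist n x y \<noteq> 0"
    using hdist0[of x q n y] x y xy by (auto simp: cls_def Hcw_def)
  ultimately have "hdist n x y = 1" by linarith
  then have "card {i. i < n \<and> x i \<noteq> y i} = 1" by (simp add: hdist_def)
  then obtain j where J: "{i. i < n \<and> x i \<noteq> y i} = {j}" by (auto simp: card_Suc_eq)
  then have jn: "j < n" and xyj: "x j \<noteq> y j" by auto
  have eq: "\<And>i. i < n \<Longrightarrow> i \<noteq> j \<Longrightarrow> x i = y i" using J by blast
  have cx: "card (supp n x) = w" and cy: "card (supp n y) = w"
    using x y by (auto simp: cls_def Hcw_def hweight_supp)
  have xw: "x \<in> words q n" and yw: "y \<in> words q n" using x y by (auto simp: cls_def Hcw_def)
  have xq: "x j < q" "y j < q" using xw yw jn by (auto simp: words_def PiE_def)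
  have nz: "x j \<noteq> 0 \<and> y j \<noteq> 0"
  proof (rule ccontr)
    assume "\<not> (x j \<noteq> 0 \<and> y j \<noteq> 0)"
    then consider "x j = 0" "y j \<noteq> 0" | "y j = 0" "x j \<noteq> 0" using xyj by auto
    then show False
    proof cases
      case 1
      then have "supp n y = insert j (supp n x)" "j \<notin> supp n x"
        using eq jn by (auto simp: supp_def) (metis neq0_conv)+
      then show False using cx cy by simp
    next
      case 2
      then have "supp n x = insert j (supp n y)" "j \<notin> supp n y"
        using eq jn by (auto simp: supp_def) (metis neq0_conv)+
      then show False using cx cy by simp
    qed
  qed
  have T: "(\<Sum>i\<in>{..<n}-{j}. x i) = (\<Sum>i\<in>{..<n}-{j}. y i)"
    using eq by (intro sum.cong) auto
  have wx: "wsum n x = x j + (\<Sum>i\<in>{..<n}-{j}. x i)"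
    unfolding wsum_def using jn by (simp add: sum.remove[of "{..<n}" j])
  have wy: "wsum n y = y j + (\<Sum>i\<in>{..<n}-{j}. y i)"
    unfolding wsum_def using jn by (simp add: sum.remove[of "{..<n}" j])
  have "wsum n x mod k = wsum n y mod k" using x y by (simp add: cls_def k_def)
  then have "x j mod k = y j mod k" using wx wy T
    by (metis mod_cancel_nat)
  moreover have "x j \<le> k" "y j \<le> k" using xq by (auto simp: k_def)
  ultimately have "x j = y j" using nz
    by (metis le_neq_implies_less mod_less mod_self mod_0 neq0_conv)
  then show False using xyj by simp
qed

theorem theorem3p6:
  fixes q n w :: nat
  assumes "q \<ge> 2" and "1 \<le> w" and "w \<le> n"
  shows "\<exists>P. is_TOC q n 2 w P"
proof -
  note FP = fixw_props[OF assms]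
  define x0 :: "nat \<Rightarrow> nat" where "x0 = (\<lambda>i. if i < w then 1 else if i < n then 0 else undefined)"
  have "supp n x0 = {..<w}" using assms by (auto simp: supp_def x0_def)
  then have x0H: "x0 \<in> Hcw q n w" using assms
    by (auto simp: Hcw_def hweight_supp words_def x0_def PiE_def extensional_def)
  have finH: "finite (Hcw q n w)"
  proof (rule finite_subset)
    show "Hcw q n w \<subseteq> words q n" by (auto simp: Hcw_def)
    show "finite (words q n)" by (simp add: words_def finite_PiE)
  qed
  have code: "is_code q n 2 w (cls q n w s)" if s: "s < q - 1" for s
    unfolding is_code_def using FP(1)[OF x0H s] code_cls[OF assms(1)]
    by (auto simp: cls_def)
  have opt: "optimal_code q n 2 w (cls q n w s)" if s: "s < q - 1" for s
  proof -
    have le: "card D \<le> card (cls q n w s)" if D: "is_code q n 2 w D" for D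
    proof (rule card_inj_on_le)
      show "inj_on (fixw q n s) D"
      proof (rule inj_onI)
        fix x y assume xD: "x \<in> D" and yD: "y \<in> D" and e: "fixw q n s x = fixw q n s y"
        have xH: "x \<in> Hcw q n w" and yH: "y \<in> Hcw q n w" using D xD yD by (auto simp: is_code_def)
        have "supp n x = supp n y" using FP(2)[OF xH s] FP(2)[OF yH s] e by simp
        then have lm: "lastp n x = lastp n y" by (simp add: lastp_def)
        have "\<And>i. i \<noteq> lastp n x \<Longrightarrow> x i = y i"
          using FP(3)[OF xH s] FP(3)[OF yH s] e lm by metis
        then have "hdist n x y \<le> 1" by (rule hdist_le1)
        then show "x = y" using D xD yD unfolding is_code_def by force
      qed
      show "fixw q n s ` D \<subseteq> cls q n w s" using FP(1)[OF _ s] D by (auto simp: is_code_def)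
      show "finite (cls q n w s)" using finH by (auto simp: cls_def)
    qed
    have fin: "finite {card C | C. is_code q n 2 w C}"
    proof (rule finite_subset)
      show "{card C | C. is_code q n 2 w C} \<subseteq> card ` Pow (Hcw q n w)"
        by (auto simp: is_code_def)
      show "finite (card ` Pow (Hcw q n w))" using finH by simp
    qed
    have "A_max q n 2 w = card (cls q n w s)"
      unfolding A_max_def
      by (rule Max_eqI[OF fin]) (use le code[OF s] in auto)
    then show ?thesis using code[OF s] by (simp add: optimal_code_def)
  qed
  define P where "P = cls q n w ` {..<q-1}"
  have "is_TOC q n 2 w P"
    unfolding is_TOC_def
  proof (intro conjI ballI impI)
    show "\<Union>P = Hcw q n w"
    proof
      show "\<Union>P \<subseteq> Hcw q n w" by (auto simp: P_def cls_def)
      show "Hcw q n w \<subseteq> \<Union>P"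
      proof
        fix x assume "x \<in> Hcw q n w"
        moreover have "wsum n x mod (q-1) < q - 1" using assms by simp
        ultimately show "x \<in> \<Union>P" unfolding P_def cls_def by blast
      qed
    qed
    fix C assume "C \<in> P"
    then show "optimal_code q n 2 w C" using opt by (auto simp: P_def)
  next
    fix C D assume "C \<in> P" "D \<in> P" "C \<noteq> D"
    then show "C \<inter> D = {}" by (auto simp: P_def cls_def)
  qed
  then show ?thesis by blast
qed

end
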